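(* Let $q,r$ be integers with $1\le q\le r$ and set $N=2^{r-q}$. Define the $1$-periodic function $f_r(\varphi)=2^{-r}\frac{\sin^2(\pi 2^r\varphi)}{\sin^2(\pi\varphi)}$ (extended continuously by $f_r(\varphi)=2^r$ at integer $\varphi$), and $$F_{r,q}(\varphi)=2^{q-r}\sum_{k=0}^{N} f_r\!\left(\varphi-k\,2^{-r}\right),\qquad G_q(\varphi)=\begin{cases}2^q,& 0\le\varphi<2^{-q},\\ 0,& 2^{-q}\le \varphi\le 1.\end{cases}$$ Then $$\int_0^1\left|F_{r,q}(\varphi)-G_q(\varphi)\right|\,d\varphi\le 2^{q-r+2}\left(1+\frac{\ln(2^{r-q})}{\pi^2}\right).$$
   Context: $f_r(\varphi)=2^r|\alpha_0(\varphi)|^2$, where $\alpha_s(\varphi)=\frac{1}{2^r}\frac{1-\exp(2\pi i(2^r\varphi-s))}{1-\exp(2\pi i(\varphi-s/2^r))}$ is the amplitude for outcome $s$ of quantum phase estimation with $r$ ancilla qubits on an eigenphase $\varphi$; $F_{r,q}$ describes the (rescaled) weight with which eigenphases are kept when the first $q$ of the $r$ ancilla qubits are measured, and $G_q$ is the corresponding ideal rectangular window. *)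

theory Defs
  imports "HOL-Analysis.Analysis"
begin

text \<open>Fejer-type kernel of phase estimation with r ancilla qubits, 1-periodic,
  extended continuously by 2^r at integer arguments.\<close>
definition f_r :: "nat \<Rightarrow> real \<Rightarrow> real" where
  "f_r r \<phi> = (if \<phi> \<in> \<int> then 2 ^ r
     else (sin (pi * 2 ^ r * \<phi>))\<^sup>2 / (2 ^ r * (sin (pi * \<phi>))\<^sup>2))"

definition F_rq :: "nat \<Rightarrow> nat \<Rightarrow> real \<Rightarrow> real" where
  "F_rq r q \<phi> = 2 powr (real q - real r) *
     (\<Sum>k = 0..2 ^ (r - q). f_r r (\<phi> - real k / 2 ^ r))"

definition G_q :: "nat \<Rightarrow> real \<Rightarrow> real" where
  "G_q q \<phi> = (if 0 \<le> \<phi> \<and> \<phi> < 1 / 2 ^ q then 2 ^ q else 0)"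

end

theory Submission
  imports Defs "HOL-Analysis.Analysis"
begin

definition D :: "nat \<Rightarrow> real \<Rightarrow> real" where "D k x = 1 + 2 * (\<Sum>m=1..k. cos (2*pi*real m*x))"
definition P :: "nat \<Rightarrow> real \<Rightarrow> real" where "P r x = (\<Sum>k<2^r. D k x) / 2^r"

lemma D_sin: "D k x * sin (pi*x) = sin ((2*real k+1)*pi*x)"
proof (induction k)
  case 0 then show ?case by (simp add: D_def)
next
  case (Suc k)
  have e: "D (Suc k) x = D k x + 2 * cos (2*pi*real (Suc k)*x)" by (simp add: D_def)
  have "2 * cos (2*pi*real (Suc k)*x) * sin (pi*x) = sin (2*pi*real (Suc k)*x + pi*x) - sin (2*pi*real (Suc k)*x - pi*x)"
    by (subst mult.assoc, subst cos_times_sin) simp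
  also have "2*pi*real (Suc k)*x + pi*x = (2*real (Suc k)+1)*pi*x" by (simp add: algebra_simps)
  also have "2*pi*real (Suc k)*x - pi*x = (2*real k+1)*pi*x" by (simp add: algebra_simps)
  finally show ?case using Suc e by (simp add: algebra_simps)
qed

lemma sum_sin: "(\<Sum>k<n. sin((2*real k+1)*y) * sin y) = (sin (real n*y))^2"
proof (induction n)
  case 0 then show ?case by simp
next
  case (Suc n)
  have a: "sin((2*real n+1)*y) * sin y = (cos (2*(real n*y)) - cos (2*((real n + 1)*y)))/2"
    by (simp add: sin_times_sin algebra_simps)
  have b: "(sin (real n*y))^2 = (1 - cos (2*(real n*y)))/2" by (simp add: cos_double_sin)
  have c: "(sin ((real n+1)*y))^2 = (1 - cos (2*((real n+1)*y)))/2" by (simp add: cos_double_sin)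
  show ?case using Suc a b c by (simp add: add.commute)
qed

lemma sum_odd: "(\<Sum>k<n. 2*real k + 1) = (real n)^2"
  by (induction n) (auto simp: power2_eq_square algebra_simps)

lemma D_int: "x \<in> \<int> \<Longrightarrow> D k x = 2*real k + 1"
proof -
  assume "x \<in> \<int>" then obtain i where i: "x = of_int i" by (auto elim: Ints_cases)
  have "cos (2*pi*real m*x) = 1" for m
  proof -
    have "2*pi*real m*x = (2*pi) * of_int (int m * i)" by (simp add: i)
    then show ?thesis by (simp only: cos_int_2pin)
  qed
  then show ?thesis by (simp add: D_def)
qed


lemma sin_per_nat: "sin (x + real n * (2*pi)) = sin x"
proof (induction n)
  case (Suc n)
  have "x + real (Suc n) * (2*pi) = (x + real n * (2*pi)) + 2*pi" by (simp add: algebra_simps)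
  then show ?case using Suc by (simp only: sin_periodic)
qed simp

lemma cos_per_nat: "cos (x + real n * (2*pi)) = cos x"
proof (induction n)
  case (Suc n)
  have "x + real (Suc n) * (2*pi) = (x + real n * (2*pi)) + 2*pi" by (simp add: algebra_simps)
  then show ?case using Suc by (simp only: cos_periodic)
qed simp

lemma cos_int_integral:
  assumes "m \<ge> 1"
  shows "((\<lambda>t. cos (2*pi*real m*(t - c))) has_integral 0) {0..1}"
proof -
  have m: "real m > 0" using assms by simp
  let ?F = "\<lambda>t. sin (2*pi*real m*(t - c)) / (2*pi*real m)"
  have "((\<lambda>t. cos (2*pi*real m*(t - c))) has_integral (?F 1 - ?F 0)) {0..1}"
  proof (rule fundamental_theorem_of_calculus)
    fix x :: real assume "x \<in> {0..1}"
    have "(?F has_real_derivative cos (2*pi*real m*(x - c))) (at x within {0..1})"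
      using m by (auto intro!: derivative_eq_intros)
    then show "(?F has_vector_derivative cos (2*pi*real m*(x - c))) (at x within {0..1})"
      by (simp add: has_real_derivative_iff_has_vector_derivative)
  qed simp
  moreover have "?F 1 = ?F 0"
  proof -
    have "2*pi*real m*(1 - c) = 2*pi*real m*(0 - c) + real m * (2*pi)" by (simp add: algebra_simps)
    then show ?thesis by (simp only: sin_per_nat) 
  qed
  ultimately show ?thesis by simp
qed

lemma D_integral: "((\<lambda>t. D k (t - c)) has_integral 1) {0..1}"
proof -
  have c1: "((\<lambda>x::real. 1::real) has_integral 1) {0..1}" using has_integral_const_real[of "1::real" 0 1] by simp
  have "((\<lambda>t. 1 + 2 * (\<Sum>m=1..k. cos (2*pi*real m*(t - c)))) has_integral (1 + 2 * (\<Sum>m=1..k. 0))) {0..1}"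
    by (intro has_integral_add has_integral_mult_right has_integral_sum cos_int_integral c1) auto
  then show ?thesis by (simp add: D_def)
qed

lemma P_integral: "((\<lambda>t. P r (t - c)) has_integral 1) {0..1}"
proof -
  have "((\<lambda>t. (\<Sum>k<2^r. D k (t - c)) / 2^r) has_integral ((\<Sum>k<(2::nat)^r. 1) / 2^r)) {0..1}"
    by (intro has_integral_divide has_integral_sum D_integral) auto
  then show ?thesis by (simp add: P_def)
qed

lemma P_cont: "continuous_on S (P r)"
  unfolding P_def D_def by (intro continuous_intros) auto

lemma P_eq: "P r x = f_r r x"
proof (cases "x \<in> \<int>")
  case True
  have "P r x = (\<Sum>k<(2::nat)^r. 2*real k + 1) / 2^r" by (simp add: P_def D_int True)
  also have "\<dots> = 2^r" by (simp only: sum_odd) (simp add: power2_eq_square)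
  finally show ?thesis using True by (simp add: f_r_def)
next
  case False
  have s: "sin (pi*x) \<noteq> 0"
  proof
    assume "sin (pi*x) = 0"
    then obtain i::int where "pi*x = of_int i * pi" by (auto simp: sin_zero_iff_int2)
    then have "x = of_int i" by simp
    then show False using False by simp
  qed
  have "P r x * 2^r * (sin (pi*x))^2 = (\<Sum>k<(2::nat)^r. D k x * sin (pi*x) * sin (pi*x))"
  proof -
    have "P r x * 2^r = (\<Sum>k<(2::nat)^r. D k x)" by (simp add: P_def)
    then show ?thesis by (simp add: sum_distrib_right power2_eq_square mult.assoc)
  qed
  also have "\<dots> = (\<Sum>k<(2::nat)^r. sin ((2*real k+1)*(pi*x)) * sin (pi*x))"
    by (simp add: D_sin mult.assoc)
  also have "\<dots> = (sin (real ((2::nat)^r) * (pi*x)))^2" by (rule sum_sin)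
  also have "\<dots> = (sin (pi * 2 ^ r * x))^2" by (simp add: algebra_simps)
  finally have "P r x * 2^r * (sin (pi*x))^2 = (sin (pi * 2 ^ r * x))^2" .
  then show ?thesis using False s by (simp add: f_r_def field_simps)
qed

lemma sum_cos_zero:
  assumes "0 < m" "m < n"
  shows "(\<Sum>j<n. cos (2*pi*real m*(t - real j / real n))) = 0"
proof -
  have n: "real n > 0" using assms by simp
  define a where "a = 2*pi*real m / real n"
  define th where "th = 2*pi*real m*t"
  define g where "g j = sin (th - real j * a + a/2)" for j :: nat
  have tm: "sin (a/2) * cos (2*pi*real m*(t - real j / real n)) = (g j - g (Suc j))/2" for j
  proof -
    have e: "2*pi*real m*(t - real j / real n) = th - real j * a" using n by (simp add: a_def th_def field_simps)
    have "sin (a/2) * cos (th - real j * a) = (sin (a/2 + (th - real j * a)) + sin (a/2 - (th - real j * a)))/2"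
      by (rule sin_times_cos)
    also have "sin (a/2 - (th - real j * a)) = - g (Suc j)"
    proof -
      have "a/2 - (th - real j * a) = - (th - real (Suc j) * a + a/2)" by (simp add: algebra_simps)
      then have "sin (a/2 - (th - real j * a)) = sin (- (th - real (Suc j) * a + a/2))" by (rule arg_cong)
      then show ?thesis by (simp only: g_def sin_minus)
    qed
    also have "a/2 + (th - real j * a) = th - real j * a + a/2" by simp
    finally show ?thesis using e by (simp add: g_def)
  qed
  have "sin (a/2) * (\<Sum>j<n. cos (2*pi*real m*(t - real j / real n))) = (\<Sum>j<n. (g j - g (Suc j))/2)"
    by (simp add: sum_distrib_left tm)
  also have "\<dots> = (g 0 - g n)/2" by (simp add: sum_divide_distrib[symmetric] sum_lessThan_telescope')
  also have "g 0 = g n"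
  proof -
    have na: "real n * a = real m * (2*pi)" unfolding a_def using n by simp
    have e2: "th - real n * a + a/2 = (th + a/2 - real m * (2*pi))" using na by simp
    have gn: "g n = sin (th + a/2 - real m * (2*pi))" by (simp only: g_def e2)
    moreover have "sin (th + a/2 - real m * (2*pi)) = sin (th + a/2)"
      using sin_per_nat[of "th + a/2 - real m * (2*pi)" m] by simp
    then show ?thesis using gn by (simp add: g_def)
  qed
  finally have "sin (a/2) * (\<Sum>j<n. cos (2*pi*real m*(t - real j / real n))) = 0" by simp
  moreover have "sin (a/2) > 0"
  proof (rule sin_gt_zero)
    show "0 < a/2" using assms n by (simp add: a_def)
    show "a/2 < pi" using assms n by (simp add: a_def field_simps)
  qed
  ultimately show ?thesis by simp
qed

lemma D_shift_sum:
  assumes "k < n"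
  shows "(\<Sum>j<n. D k (t - real j / real n)) = real n"
proof -
  have "(\<Sum>j<n. D k (t - real j / real n)) = real n + 2 * (\<Sum>m=1..k. \<Sum>j<n. cos (2*pi*real m*(t - real j / real n)))"
  proof -
    have "(\<Sum>j<n. D k (t - real j / real n)) = (\<Sum>j<n. 1 + 2 * (\<Sum>m=1..k. cos (2*pi*real m*(t - real j / real n))))"
      by (simp add: D_def)
    also have "\<dots> = real n + 2 * (\<Sum>j<n. \<Sum>m=1..k. cos (2*pi*real m*(t - real j / real n)))"
      by (simp add: sum.distrib sum_distrib_left)
    also have "(\<Sum>j<n. \<Sum>m=1..k. cos (2*pi*real m*(t - real j / real n))) = (\<Sum>m=1..k. \<Sum>j<n. cos (2*pi*real m*(t - real j / real n)))"
      by (rule sum.swap)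
    finally show ?thesis .
  qed
  also have "(\<Sum>m=1..k. \<Sum>j<n. cos (2*pi*real m*(t - real j / real n))) = 0"
    using assms by (intro sum.neutral ballI sum_cos_zero) auto
  finally show ?thesis by simp
qed

lemma P_shift_sum: "(\<Sum>j<(2::nat)^r. P r (t - real j / 2^r)) = 2^r"
proof -
  have "(\<Sum>j<(2::nat)^r. P r (t - real j / 2^r)) = (\<Sum>k<(2::nat)^r. \<Sum>j<(2::nat)^r. D k (t - real j / real ((2::nat)^r))) / 2^r"
  proof -
    have "(\<Sum>j<(2::nat)^r. P r (t - real j / 2^r)) = (\<Sum>j<(2::nat)^r. (\<Sum>k<(2::nat)^r. D k (t - real j / real ((2::nat)^r))) / 2^r)"
      by (simp add: P_def)
    also have "\<dots> = (\<Sum>j<(2::nat)^r. \<Sum>k<(2::nat)^r. D k (t - real j / real ((2::nat)^r))) / 2^r"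
      by (simp only: sum_divide_distrib)
    also have "(\<Sum>j<(2::nat)^r. \<Sum>k<(2::nat)^r. D k (t - real j / real ((2::nat)^r))) = (\<Sum>k<(2::nat)^r. \<Sum>j<(2::nat)^r. D k (t - real j / real ((2::nat)^r)))"
      by (rule sum.swap)
    finally show ?thesis .
  qed
  also have "\<dots> = (\<Sum>k<(2::nat)^r. real ((2::nat)^r)) / 2^r"
    by (intro arg_cong[where f="\<lambda>x. x / 2^r"] sum.cong refl D_shift_sum) simp
  finally show ?thesis by simp
qed



lemma f_nonneg: "f_r r x \<ge> 0"
  by (simp add: f_r_def)

lemma f_cont: "continuous_on S (f_r r)"
proof -
  have "f_r r = P r" by (rule ext) (simp add: P_eq)
  then show ?thesis using P_cont by metis
qed

lemma f_le: "x \<notin> \<int> \<Longrightarrow> f_r r x \<le> (1/2^r) / (sin (pi*x))^2"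
proof -
  assume "x \<notin> \<int>"
  then have "f_r r x = (sin (pi * 2 ^ r * x))\<^sup>2 / (2 ^ r * (sin (pi * x))\<^sup>2)" by (simp add: f_r_def)
  also have "\<dots> \<le> 1 / (2 ^ r * (sin (pi * x))\<^sup>2)"
    by (intro divide_right_mono) (auto simp: abs_square_le_1)
  finally show ?thesis by simp
qed

lemma y_cos_le_sin:
  assumes "0 \<le> y" "y \<le> pi/2"
  shows "y * cos y \<le> sin y"
proof -
  have "(\<lambda>t. sin t - t * cos t) 0 \<le> (\<lambda>t. sin t - t * cos t) y"
  proof (rule DERIV_nonneg_imp_nondecreasing[OF assms(1)])
    fix x :: real assume x: "0 \<le> x" "x \<le> y"
    have "DERIV (\<lambda>t. sin t - t * cos t) x :> x * sin x"
      by (auto intro!: derivative_eq_intros simp: algebra_simps)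
    moreover have "x * sin x \<ge> 0" using x assms by (intro mult_nonneg_nonneg sin_ge_zero) auto
    ultimately show "\<exists>d. DERIV (\<lambda>t. sin t - t * cos t) x :> d \<and> d \<ge> 0" by blast
  qed
  then show ?thesis by simp
qed

lemma cot_le:
  assumes "0 < y" "y \<le> pi/2"
  shows "cot y \<le> 1/y"
proof -
  have s: "sin y > 0" using assms by (intro sin_gt_zero) auto
  have "y * cos y \<le> sin y" using assms by (intro y_cos_le_sin) auto
  then show ?thesis using s assms by (simp add: cot_def field_simps)
qed

lemma tail_integral:
  assumes c: "0 < c" "c < W" "W \<le> 1"
  shows "integral {W..1} (\<lambda>t. f_r r (t - c)) \<le> (1/2^r) / pi * (cot (pi*(W - c)) + cot (pi*c))"
proof -
  let ?h = "\<lambda>t. (1/2^r) / (sin (pi*(t - c)))^2"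
  let ?H = "\<lambda>t. - ((1/2^r) / pi) * cot (pi*(t - c))"
  have spos: "sin (pi*(t - c)) > 0" if "t \<in> {W..1}" for t
    using that c by (intro sin_gt_zero) auto
  have hint: "(?h has_integral (?H 1 - ?H W)) {W..1}"
  proof (rule fundamental_theorem_of_calculus)
    show "W \<le> 1" by fact
    fix x :: real assume x: "x \<in> {W..1}"
    have d1: "((\<lambda>t. pi*(t-c)) has_real_derivative pi) (at x within {W..1})"
      by (auto intro!: derivative_eq_intros)
    have d2: "DERIV cot (pi*(x-c)) :> -inverse((sin(pi*(x-c)))\<^sup>2)"
      using spos[OF x] by (intro DERIV_cot) simp
    have "((\<lambda>t. cot (pi*(t-c))) has_real_derivative (-inverse((sin(pi*(x-c)))\<^sup>2))*pi) (at x within {W..1})"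
      by (rule DERIV_chain2[OF d2 d1])
    then have "(?H has_real_derivative (- ((1/2^r) / pi)) * ((-inverse((sin(pi*(x-c)))\<^sup>2))*pi)) (at x within {W..1})"
      by (rule DERIV_cmult)
    moreover have "(- ((1/2^r) / pi)) * ((-inverse((sin(pi*(x-c)))\<^sup>2))*pi) = ?h x"
      by (simp add: field_simps)
    ultimately have "(?H has_real_derivative ?h x) (at x within {W..1})" by simp
    then show "(?H has_vector_derivative ?h x) (at x within {W..1})"
      by (simp add: has_real_derivative_iff_has_vector_derivative)
  qed
  have c1: "cot (pi*(1 - c)) = - cot (pi*c)"
  proof -
    have "pi*(1 - c) = pi - pi*c" by (simp add: algebra_simps)
    then show ?thesis by (simp add: cot_def)
  qed
  have fint: "(\<lambda>t. f_r r (t - c)) integrable_on {W..1}"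
    by (intro integrable_continuous_real continuous_on_compose2[OF f_cont[of UNIV]] continuous_intros) auto
  have "integral {W..1} (\<lambda>t. f_r r (t - c)) \<le> ?H 1 - ?H W"
  proof (rule has_integral_le[OF integrable_integral[OF fint] hint])
    fix t assume t: "t \<in> {W..1}"
    have "t - c \<notin> \<int>"
    proof
      assume "t - c \<in> \<int>"
      then have "sin (pi*(t - c)) = 0" by (auto elim!: Ints_cases simp: sin_zero_iff_int2 mult.commute)
      then show False using spos[OF t] by simp
    qed
    then show "f_r r (t - c) \<le> ?h t" by (rule f_le)
  qed
  also have "?H 1 - ?H W = (1/2^r) / pi * (cot (pi*(W - c)) + cot (pi*c))"
    using c1 by (simp add: algebra_simps)
  finally show ?thesis .
qed



lemma I_bound:
  assumes "1 \<le> k" "k < n" "2 * n \<le> 2^r"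
  shows "integral {real n / 2^r..1} (\<lambda>t. f_r r (t - real k / 2^r)) \<le> (1/pi^2) * (1/real k + 1/real (n - k))"
proof -
  have M: "(2::real)^r \<ge> 2 * real n"
    using assms(3) by (metis of_nat_le_iff of_nat_mult of_nat_numeral of_nat_power)
  have kpos: "real k > 0" using assms by simp
  have nk: "real (n - k) = real n - real k" using assms by simp
  have nkpos: "real n - real k > 0" using assms by simp
  define W where "W = real n / 2^r"
  define c where "c = real k / 2^r"
  have c0: "0 < c" using kpos by (simp add: c_def)
  have cW: "c < W" using assms by (simp add: c_def W_def divide_strict_right_mono)
  have W1: "W \<le> 1/2" using M by (simp add: W_def field_simps)
  have "integral {W..1} (\<lambda>t. f_r r (t - c)) \<le> (1/2^r) / pi * (cot (pi*(W - c)) + cot (pi*c))"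
    using c0 cW W1 by (intro tail_integral) auto
  also have "\<dots> \<le> (1/2^r) / pi * (1/(pi*(W - c)) + 1/(pi*c))"
  proof (intro mult_left_mono add_mono cot_le)
    show "0 < pi * (W - c)" using cW by simp
    show "pi * (W - c) \<le> pi / 2" using W1 c0 by simp
    show "0 < pi * c" using c0 by simp
    show "pi * c \<le> pi/2" using W1 cW by simp
  qed simp
  also have "\<dots> = (1/pi^2) * (1/real k + 1/real (n - k))"
    using kpos nkpos by (simp add: W_def c_def nk field_simps power2_eq_square)
  finally show ?thesis by (simp add: W_def c_def)
qed

lemma harm_bound: "n \<ge> 1 \<Longrightarrow> (\<Sum>k\<in>{1..<n}. 1/real k) \<le> 1 + ln (real n)"
proof -
  assume n: "n \<ge> 1"
  have "(\<Sum>k\<in>{1..<n}. 1/real k) = harm (n - 1)"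
    unfolding harm_def using n by (intro sum.cong) (auto simp: divide_inverse)
  also have "\<dots> \<le> 1 + ln (real n)"
  proof (cases "n = 1")
    case True then show ?thesis by (simp add: harm_def)
  next
    case False
    then have "harm (n-1) - ln (real (n-1)) \<le> harm 1 - ln (real (1::nat))"
      using n by (intro euler_mascheroni_sequence_decreasing) auto
    moreover have "ln (real (n-1)) \<le> ln (real n)" using False n by (subst ln_le_cancel_iff) auto
    ultimately show ?thesis by (simp add: harm_def)
  qed
  finally show ?thesis .
qed

lemma refl_sum: "(\<Sum>k\<in>{1..<n}. 1/real (n - k)) = (\<Sum>k\<in>{1..<n}. 1/real k)"
  by (rule sum.reindex_bij_witness[where i="\<lambda>k. n - k" and j="\<lambda>k. n - k"]) auto



lemma lin_aux: "4 * (u::real) \<le> 1 \<Longrightarrow> (n::real) - (n + 1) + 2 * (2 + (2 * u + 2 * (t::real))) \<le> 4 * (1 + t)"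
  by (simp add: algebra_simps)

theorem mainTheorem4:
  fixes q r :: nat
  assumes "1 \<le> q" and "q \<le> r"
  shows "(\<lambda>\<phi>. \<bar>F_rq r q \<phi> - G_q q \<phi>\<bar>) integrable_on {0..1} \<and>
         integral {0..1} (\<lambda>\<phi>. \<bar>F_rq r q \<phi> - G_q q \<phi>\<bar>)
           \<le> 2 powr (real q - real r + 2) * (1 + ln (2 ^ (r - q)) / pi\<^sup>2)"
proof -
  define Nn :: nat where "Nn = 2^(r-q)"
  define N :: real where "N = real Nn"
  have Nn1: "Nn \<ge> 1" by (simp add: Nn_def)
  have Npos: "N \<ge> 1" using Nn1 by (simp add: N_def)
  have MN: "(2::real)^r = N * 2^q"
  proof -
    have "(2::real)^r = 2^(r-q+q)" using assms by simp
    also have "\<dots> = 2^(r-q) * 2^q" by (rule power_add)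
    finally show ?thesis by (simp add: N_def Nn_def)
  qed
  have Nnat: "2 * Nn \<le> 2^r"
  proof -
    have "2 * Nn = 2^(Suc (r-q))" by (simp add: Nn_def)
    also have "\<dots> \<le> 2^r" using assms by (intro power_increasing) linarith+
    finally show ?thesis .
  qed
  have NnM: "Nn < 2^r" using Nnat Nn1 by linarith
  define W :: real where "W = 1/2^q"
  have W: "W = N / 2^r"
  proof -
    have "N / 2^r = N / (N * 2^q)" by (simp only: MN)
    also have "\<dots> = 1 / 2^q" using Npos by simp
    finally show ?thesis by (simp add: W_def)
  qed
  have W0: "0 \<le> W" "W \<le> 1" using assms by (auto simp: W_def)
  have c0: "2 powr (real q - real r) = 1/N"
  proof -
    have e: "real q - real r = - real (r - q)" using assms by simp
    have "2 powr (real q - real r) = inverse (2 powr real (r - q))" unfolding e by (rule powr_minus)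
    also have "(2::real) powr real (r - q) = 2 ^ (r - q)" by (rule powr_realpow) simp
    finally show ?thesis by (simp add: divide_inverse N_def Nn_def)
  qed
  have c4: "2 powr (real q - real r + 2) = 4/N"
  proof -
    have "2 powr (real q - real r + 2) = 2 powr (real q - real r) * 2 powr 2" by (rule powr_add)
    also have "\<dots> = 1/N * 4" by (simp only: c0) (simp add: powr_numeral)
    finally show ?thesis by simp
  qed
  define S where "S = (\<lambda>\<phi>. \<Sum>k = 0..Nn. f_r r (\<phi> - real k / 2 ^ r))"
  have F: "F_rq r q \<phi> = S \<phi> / N" for \<phi>
    by (simp add: F_rq_def S_def c0 Nn_def)
  have Snn: "S \<phi> \<ge> 0" for \<phi> unfolding S_def by (intro sum_nonneg f_nonneg)
  have Sle: "S \<phi> \<le> 2^r" for \<phi>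
  proof -
    have "S \<phi> \<le> (\<Sum>j<(2::nat)^r. f_r r (\<phi> - real j / 2^r))"
      unfolding S_def using NnM by (intro sum_mono2 f_nonneg) auto
    also have "\<dots> = (\<Sum>j<(2::nat)^r. P r (\<phi> - real j / 2^r))" by (simp add: P_eq)
    also have "\<dots> = 2^r" by (rule P_shift_sum)
    finally show ?thesis .
  qed
  have Scont: "continuous_on T S" for T
    unfolding S_def
    by (intro continuous_intros continuous_on_compose2[OF f_cont[of UNIV]]) auto
  have Sint: "(S has_integral (N + 1)) {0..1}"
  proof -
    have "((\<lambda>\<phi>. \<Sum>k = 0..Nn. P r (\<phi> - real k / 2 ^ r)) has_integral (\<Sum>k = 0..Nn. 1)) {0..1}"
      by (intro has_integral_sum P_integral) auto
    then show ?thesis by (simp add: S_def P_eq N_def add.commute)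
  qed
  define A where "A k = integral {W..1} (\<lambda>t. f_r r (t - real k / 2^r))" for k :: nat
  have Aint: "(S has_integral (\<Sum>k = 0..Nn. A k)) {W..1}"
    unfolding S_def A_def
    by (intro has_integral_sum integrable_integral integrable_continuous_real
          continuous_on_compose2[OF f_cont[of UNIV]] continuous_intros) auto
  have A1: "A k \<le> 1" for k
  proof -
    have fi: "(\<lambda>t. f_r r (t - real k / 2^r)) integrable_on T" if "T = {W..1} \<or> T = {0..1}" for T
      using that by (auto intro!: integrable_continuous_real continuous_on_compose2[OF f_cont[of UNIV]] continuous_intros)
    have "A k \<le> integral {0..1} (\<lambda>t. f_r r (t - real k / 2^r))"
      unfolding A_def using W0 by (intro integral_subset_le fi f_nonneg ballI) auto
    also have "\<dots> = 1" using P_integral[of r "real k / 2^r"] by (simp add: P_eq integral_unique)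
    finally show ?thesis .
  qed
  have Ak: "A k \<le> (1/pi^2) * (1/real k + 1/real (Nn - k))" if "1 \<le> k" "k < Nn" for k
    unfolding A_def W using I_bound[OF that Nnat] by (simp add: N_def)
  have Asum: "(\<Sum>k = 0..Nn. A k) \<le> 2 + (2/pi^2) * (1 + ln N)"
  proof -
    have set: "{0..Nn} = insert 0 (insert Nn {1..<Nn})" using Nn1 by auto
    have "(\<Sum>k = 0..Nn. A k) = A 0 + (A Nn + (\<Sum>k\<in>{1..<Nn}. A k))"
      using Nn1 by (simp add: set)
    also have "(\<Sum>k\<in>{1..<Nn}. A k) \<le> (\<Sum>k\<in>{1..<Nn}. (1/pi^2) * (1/real k + 1/real (Nn - k)))"
      by (intro sum_mono Ak) auto
    also have "\<dots> = (1/pi^2) * ((\<Sum>k\<in>{1..<Nn}. 1/real k) + (\<Sum>k\<in>{1..<Nn}. 1/real (Nn - k)))"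
      by (simp only: sum.distrib[symmetric] sum_distrib_left)
    also have "\<dots> = (2/pi^2) * (\<Sum>k\<in>{1..<Nn}. 1/real k)" unfolding refl_sum by simp
    also have "\<dots> \<le> (2/pi^2) * (1 + ln N)"
      unfolding N_def using Nn1 by (intro mult_left_mono harm_bound) auto
    finally show ?thesis using A1[of 0] A1[of Nn] by linarith
  qed
  define AS where "AS = (\<Sum>k = 0..Nn. A k)"
  define BS where "BS = integral {0..W} S"
  have Bint: "(S has_integral BS) {0..W}"
    unfolding BS_def by (intro integrable_integral integrable_continuous_real Scont)
  have BA: "BS + AS = N + 1"
  proof -
    have "(S has_integral (BS + AS)) {0..1}"
      using has_integral_combine[OF W0 Bint Aint] by (simp add: AS_def)
    then show ?thesis using Sint by (rule has_integral_unique)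
  qed
  have part1: "((\<lambda>\<phi>. \<bar>F_rq r q \<phi> - G_q q \<phi>\<bar>) has_integral (1 - BS / N)) {0..W}"
  proof (rule has_integral_spike_finite[of "{W}"])
    show "finite {W}" by simp
    fix \<phi> assume p: "\<phi> \<in> {0..W} - {W}"
    then have G: "G_q q \<phi> = 2^q" by (auto simp: G_q_def W_def)
    have "S \<phi> / N \<le> 2^q" using Sle[of \<phi>] MN Npos by (simp add: field_simps)
    then show "\<bar>F_rq r q \<phi> - G_q q \<phi>\<bar> = 2^q - S \<phi> / N" by (simp add: F G)
  next
    have k: "((\<lambda>\<phi>::real. (2::real)^q) has_integral 2^q * W) {0..W}"
      using has_integral_const_real[of "(2::real)^q" 0 W] W0 by (simp add: mult.commute)
    have "((\<lambda>\<phi>. 2^q - S \<phi> / N) has_integral (2^q * W - BS / N)) {0..W}"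
      by (rule has_integral_diff[OF k has_integral_divide[OF Bint]])
    then show "((\<lambda>\<phi>. 2^q - S \<phi> / N) has_integral (1 - BS / N)) {0..W}" by (simp add: W_def)
  qed
  have part2: "((\<lambda>\<phi>. \<bar>F_rq r q \<phi> - G_q q \<phi>\<bar>) has_integral (AS / N)) {W..1}"
  proof (rule has_integral_spike_finite[of "{}"])
    show "finite {}" by simp
    fix \<phi> assume p: "\<phi> \<in> {W..1} - {}"
    then have G: "G_q q \<phi> = 0" by (auto simp: G_q_def W_def)
    show "\<bar>F_rq r q \<phi> - G_q q \<phi>\<bar> = S \<phi> / N" using Snn[of \<phi>] Npos by (simp add: F G)
  next
    show "((\<lambda>\<phi>. S \<phi> / N) has_integral (AS / N)) {W..1}"
      unfolding AS_def by (intro has_integral_divide Aint)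
  qed
  have tot: "((\<lambda>\<phi>. \<bar>F_rq r q \<phi> - G_q q \<phi>\<bar>) has_integral (1 - BS / N + AS / N)) {0..1}"
    by (rule has_integral_combine[OF W0 part1 part2])
  have "1 - BS / N + AS / N \<le> 2 powr (real q - real r + 2) * (1 + ln (2 ^ (r - q)) / pi\<^sup>2)"
  proof -
    have l: "ln (2 ^ (r - q)) = ln N" by (simp add: N_def Nn_def)
    have pi2: "pi^2 \<ge> 4"
    proof -
      have "(2::real)^2 \<le> pi^2" using pi_gt3 by (intro power_mono) auto
      then show ?thesis by simp
    qed
    have "1 - BS / N + AS / N = (N * 1 - (N + 1) + 2 * AS) / N" using BA Npos by (simp add: field_simps)
    also have "\<dots> \<le> (N - (N+1) + 2 * (2 + (2/pi^2) * (1 + ln N))) / N"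
    proof (rule divide_right_mono)
      have "2 * AS \<le> 2 * (2 + (2/pi^2) * (1 + ln N))" using Asum unfolding AS_def by (rule mult_left_mono) simp
      then show "N * 1 - (N + 1) + 2 * AS \<le> N - (N+1) + 2 * (2 + (2/pi^2) * (1 + ln N))" by linarith
    qed (use Npos in linarith)
    also have "\<dots> \<le> 4/N * (1 + ln N / pi^2)"
    proof -
      have "4/pi^2 \<le> 1" using pi2 by (subst divide_le_eq_1_pos) auto
      then have u: "4 * (1/pi^2) \<le> 1" by simp
      have e: "(2/pi^2) * (1 + ln N) = 2*(1/pi^2) + 2*(ln N/pi^2)" by (simp add: field_simps)
      have "N - (N+1) + 2 * (2 + (2/pi^2) * (1 + ln N)) \<le> 4 * (1 + ln N / pi^2)"
        unfolding e using lin_aux[OF u] .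
      then show ?thesis using Npos by (simp add: divide_right_mono)
    qed
    finally show ?thesis by (simp add: c4 l)
  qed
  then show ?thesis using tot by (auto simp: integral_unique)
qed


end
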